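(* Let $T\ge1$ and let $d_1,\dots,d_T\in\{0,1,2,\dots\}$ satisfy $t+d_t\le T$ for all $t\in[T]$. For $t\in[T]$ let $m_t=\{\tau\in[t-1]:\tau+d_\tau\ge t\}$ and $\sigma_{\max}=\max_{t\in[T]}|m_t|$. For $S\subseteq[T]$ let $d_{\mathrm{tot}}(S)=\sum_{\tau\in S}d_\tau$ and $\bar S=[T]\setminus S$. Then $$\sigma_{\max}\le2\sqrt2\min_{S\subseteq[T]}\left(|S|+\sqrt{d_{\mathrm{tot}}(\bar S)}\right).$$
   Context: $[k]=\{1,\dots,k\}$, $[0]=\emptyset$. The set $m_t$ consists of the rounds before $t$ whose feedback (revealed at the end of round $\tau+d_\tau$) has not been received before round $t$. *)

theory Defs
  imports Complex_Main
begin

definition missing :: "(nat \<Rightarrow> nat) \<Rightarrow> nat \<Rightarrow> nat set" where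
  "missing d t = {\<tau> \<in> {1..t-1}. \<tau> + d \<tau> \<ge> t}"

definition sigma_max :: "nat \<Rightarrow> (nat \<Rightarrow> nat) \<Rightarrow> nat" where
  "sigma_max T d = Max ((\<lambda>t. card (missing d t)) ` {1..T})"

definition d_tot :: "(nat \<Rightarrow> nat) \<Rightarrow> nat set \<Rightarrow> nat" where
  "d_tot d S = (\<Sum>\<tau>\<in>S. d \<tau>)"

end

theory Submission
  imports Defs
begin

lemma sum_distinct_pos:
  fixes B :: "nat set"
  shows "finite B \<Longrightarrow> 0 \<notin> B \<Longrightarrow> card B * (card B + 1) \<le> 2 * \<Sum>B"
proof (induction "card B" arbitrary: B)
  case 0
  then show ?case by simp
next
  case (Suc n)
  then have ne: "B \<noteq> {}" by auto
  define m where "m = Max B"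
  have mB: "m \<in> B" using Max_in[OF Suc.prems(1) ne] m_def by simp
  have sub: "B \<subseteq> {1..m}"
  proof
    fix x assume x: "x \<in> B"
    then have "x \<noteq> 0" using Suc.prems by metis
    then have "1 \<le> x" by simp
    moreover have "x \<le> m" unfolding m_def using x Suc.prems(1) by (rule_tac Max_ge)
    ultimately show "x \<in> {1..m}" by simp
  qed
  have "card B \<le> m" using card_mono[OF _ sub] by simp
  have cB: "card (B - {m}) = n" using Suc.hyps(2) mB Suc.prems by simp
  have IH: "n * (n + 1) \<le> 2 * \<Sum>(B - {m})"
    using Suc.hyps(1)[of "B - {m}"] cB Suc.prems by auto
  have "\<Sum>B = m + \<Sum>(B - {m})" using Suc.prems(1) mB by (simp add: sum.remove)
  then show ?case using IH \<open>card B \<le> m\<close> Suc.hyps(2)[symmetric] by simp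
qed

lemma card_bound:
  fixes d :: "nat \<Rightarrow> nat"
  assumes t: "t \<in> {1..T}" and S: "S \<subseteq> {1..T}"
  shows "real (card (missing d t)) \<le> real (card S) + sqrt 2 * sqrt (real (d_tot d ({1..T} - S)))"
proof -
  define A where "A = missing d t - S"
  define j where "j = card A"
  have mfin: "finite (missing d t)" unfolding missing_def by simp
  have msub: "missing d t \<subseteq> {1..T}" using t unfolding missing_def by auto
  have Afin: "finite A" using mfin A_def by simp
  have Sfin: "finite S" using S finite_subset by blast
  have "missing d t \<subseteq> S \<union> A" by (auto simp: A_def)
  then have "card (missing d t) \<le> card (S \<union> A)" using Sfin Afin by (intro card_mono) auto
  also have "\<dots> \<le> card S + card A" by (rule card_Un_le)
  finally have k: "card (missing d t) \<le> card S + j" unfolding j_def .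
  have inj: "inj_on (\<lambda>\<tau>. t - \<tau>) A"
    unfolding A_def missing_def by (auto simp: inj_on_def)
  have B0: "0 \<notin> (\<lambda>\<tau>. t - \<tau>) ` A" unfolding A_def missing_def by auto
  have "j * (j + 1) \<le> 2 * \<Sum>((\<lambda>\<tau>. t - \<tau>) ` A)"
    using sum_distinct_pos[of "(\<lambda>\<tau>. t - \<tau>) ` A"] Afin B0 card_image[OF inj] j_def by simp
  also have "\<Sum>((\<lambda>\<tau>. t - \<tau>) ` A) = (\<Sum>\<tau>\<in>A. t - \<tau>)" using sum.reindex[OF inj] by simp
  also have "(\<Sum>\<tau>\<in>A. t - \<tau>) \<le> (\<Sum>\<tau>\<in>A. d \<tau>)"
    by (rule sum_mono) (auto simp: A_def missing_def)
  also have "(\<Sum>\<tau>\<in>A. d \<tau>) \<le> d_tot d ({1..T} - S)"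
    unfolding d_tot_def by (rule sum_mono2) (use msub A_def in auto)
  finally have jj: "j * (j + 1) \<le> 2 * d_tot d ({1..T} - S)" by auto
  have "j * j \<le> j * (j + 1)" by simp
  then have "j * j \<le> 2 * d_tot d ({1..T} - S)" using jj by linarith
  then have "real j * real j \<le> 2 * real (d_tot d ({1..T} - S))"
    by (metis of_nat_le_iff of_nat_mult of_nat_numeral)
  then have "real j \<le> sqrt (2 * real (d_tot d ({1..T} - S)))"
    by (metis of_nat_0_le_iff power2_eq_square real_le_rsqrt)
  then show ?thesis using k by (simp add: real_sqrt_mult)
qed

theorem lemmaA7:
  fixes T :: nat and d :: "nat \<Rightarrow> nat"
  assumes "T \<ge> 1"
    and "\<And>t. t \<in> {1..T} \<Longrightarrow> t + d t \<le> T"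
  shows "real (sigma_max T d) \<le>
    2 * sqrt 2 * (MIN S\<in>Pow {1..T}. real (card S) + sqrt (real (d_tot d ({1..T} - S))))"
proof -
  have ne: "{1..T} \<noteq> {}" using assms(1) by simp
  have "sigma_max T d \<in> (\<lambda>t. card (missing d t)) ` {1..T}"
    unfolding sigma_max_def by (rule Max_in) (use ne in auto)
  then obtain t where t: "t \<in> {1..T}" "sigma_max T d = card (missing d t)" by auto
  have "real (card (missing d t)) \<le> 2 * sqrt 2 * (real (card S) + sqrt (real (d_tot d ({1..T} - S))))"
    if "S \<in> Pow {1..T}" for S
  proof -
    have h: "real (card (missing d t)) \<le> real (card S) + sqrt 2 * sqrt (real (d_tot d ({1..T} - S)))"
      using card_bound[OF t(1)] that by auto
    have s2: "1 \<le> sqrt (2::real)" by simp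
    have s3: "1 \<le> 2 * sqrt (2::real)" using s2 by linarith
    have a1: "1 * real (card S) \<le> 2 * sqrt 2 * real (card S)"
      using s3 by (intro mult_right_mono) auto
    have a2: "sqrt 2 * sqrt (real (d_tot d ({1..T} - S))) \<le> 2 * sqrt 2 * sqrt (real (d_tot d ({1..T} - S)))"
      by (simp add: mult_right_mono)
    show ?thesis unfolding distrib_left using h a1 a2 by linarith
  qed
  note B = this
  have fin: "finite (Pow {1..T})" "Pow {1..T} \<noteq> {}" by auto
  obtain S where S: "S \<in> Pow {1..T}" and
    Seq: "(MIN S\<in>Pow {1..T}. real (card S) + sqrt (real (d_tot d ({1..T} - S))))
       = real (card S) + sqrt (real (d_tot d ({1..T} - S)))"
    using Min_in[of "(\<lambda>S. real (card S) + sqrt (real (d_tot d ({1..T} - S)))) ` Pow {1..T}"] fin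
    by (metis (no_types, lifting) finite_imageI image_is_empty imageE)
  show ?thesis unfolding t(2) Seq using B[OF S] .
qed

end
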